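(* Let $\mathfrak{H}$ be a fat indecomposable Hoffman graph with $\lambda_{\min}(\mathfrak{H})\ge-1-\tau$, where $\tau=\frac{1+\sqrt5}{2}$. If some slim vertex of $\mathfrak{H}$ has at least two fat neighbours, then $\mathcal{S}(\mathfrak{H})$ is isomorphic to $\mathcal{Q}_{0,0,1}$ (a single vertex), $\mathcal{Q}_{1,0,1}$ (two vertices joined by a $(+)$-edge), or $\mathcal{Q}_{0,1,1}$ (two vertices joined by a $(-)$-edge); in particular $\mathfrak{H}$ has at most two slim vertices.
   Context: A Hoffman graph $\mathfrak{H}$ is a finite simple graph $H$ together with a labeling of each vertex as slim or fat, such that every fat vertex is adjacent to at least one slim vertex and the fat vertices are pairwise non-adjacent. $V^s(\mathfrak{H})$ denotes the set of slim vertices and $N^f_{\mathfrak{H}}(x)$ the set of fat neighbours of $x$. $\mathfrak{H}$ is fat if every slim vertex has a fat neighbour. An induced Hoffman subgraph is a Hoffman graph whose underlying graph is an induced subgraph with inherited labels. Writing the adjacency matrix of $H$ with fat vertices last as $\begin{pmatrix}A_s & C\\ C^T & O\end{pmatrix}$, set $B(\mathfrak{H})=A_s-CC^T$; $\lambda_{\min}(\mathfrak{H})$ is its smallest eigenvalue. A decomposition of $\mathfrak{H}$ is a family $\{\mathfrak{H}^i\}_{i=1}^n$ of induced Hoffman subgraphs such that: (i) $V(\mathfrak{H})=\bigcup_i V(\mathfrak{H}^i)$; (ii) slim vertex sets of distinct members are disjoint; (iii) if $x\in V^s(\mathfrak{H}^i)$ and $y$ is a fat neighbour of $x$ in $\mathfrak{H}$,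 then $y\in V(\mathfrak{H}^i)$; (iv) if $x\in V^s(\mathfrak{H}^i)$, $y\in V^s(\mathfrak{H}^j)$, $i\neq j$, then $|N^f_{\mathfrak{H}}(x)\cap N^f_{\mathfrak{H}}(y)|\le 1$, with equality iff $x,y$ are adjacent. $\mathfrak{H}$ is indecomposable if it has no decomposition with $n\ge2$. The special graph $\mathcal{S}(\mathfrak{H})$ is the edge-signed graph (edges labelled $+$ or $-$) with vertex set $V^s(\mathfrak{H})$ in which distinct $u,v$ are joined by a $(+)$-edge iff they are adjacent in $\mathfrak{H}$ and have no common fat neighbour, by a $(-)$-edge iff they are non-adjacent in $\mathfrak{H}$ and have a common fat neighbour, and are not joined otherwise; isomorphisms of edge-signed graphs preserve signs. *)

theory Defs
  imports Complex_Main
begin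

text \<open>A Hoffman graph on vertex set V (of type 'a) with slim vertex set S
  (fat vertices are V - S) and adjacency relation E.\<close>

definition hoffman_graph :: "'a set \<Rightarrow> 'a set \<Rightarrow> ('a \<Rightarrow> 'a \<Rightarrow> bool) \<Rightarrow> bool" where
  "hoffman_graph V S E \<longleftrightarrow>
     finite V \<and> S \<subseteq> V \<and>
     (\<forall>u v. E u v \<longrightarrow> u \<in> V \<and> v \<in> V) \<and>
     (\<forall>u v. E u v \<longrightarrow> E v u) \<and>
     (\<forall>u. \<not> E u u) \<and>
     (\<forall>y\<in>V - S. \<exists>x\<in>S. E x y) \<and>
     (\<forall>y\<in>V - S. \<forall>z\<in>V - S. \<not> E y z)"

definition fat_nbrs :: "'a set \<Rightarrow> 'a set \<Rightarrow> ('a \<Rightarrow> 'a \<Rightarrow> bool) \<Rightarrow> 'a \<Rightarrow> 'a set" where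
  "fat_nbrs V S E x = {y \<in> V - S. E x y}"

definition fat_hoffman :: "'a set \<Rightarrow> 'a set \<Rightarrow> ('a \<Rightarrow> 'a \<Rightarrow> bool) \<Rightarrow> bool" where
  "fat_hoffman V S E \<longleftrightarrow> (\<forall>x\<in>S. fat_nbrs V S E x \<noteq> {})"

definition induced_hoffman_subgraph ::
  "'a set \<Rightarrow> 'a set \<Rightarrow> ('a \<Rightarrow> 'a \<Rightarrow> bool) \<Rightarrow> 'a set \<Rightarrow> bool" where
  "induced_hoffman_subgraph V S E W \<longleftrightarrow>
     W \<subseteq> V \<and> hoffman_graph W (S \<inter> W) (\<lambda>u v. E u v \<and> u \<in> W \<and> v \<in> W)"

definition decomposition ::
  "'a set \<Rightarrow> 'a set \<Rightarrow> ('a \<Rightarrow> 'a \<Rightarrow> bool) \<Rightarrow> nat \<Rightarrow> (nat \<Rightarrow> 'a set) \<Rightarrow> bool" where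
  "decomposition V S E n Hs \<longleftrightarrow>
     (\<forall>i<n. Hs i \<noteq> {} \<and> induced_hoffman_subgraph V S E (Hs i)) \<and>
     V = (\<Union>i<n. Hs i) \<and>
     (\<forall>i<n. \<forall>j<n. i \<noteq> j \<longrightarrow> (S \<inter> Hs i) \<inter> (S \<inter> Hs j) = {}) \<and>
     (\<forall>i<n. \<forall>x\<in>S \<inter> Hs i. fat_nbrs V S E x \<subseteq> Hs i) \<and>
     (\<forall>i<n. \<forall>j<n. i \<noteq> j \<longrightarrow> (\<forall>x\<in>S \<inter> Hs i. \<forall>y\<in>S \<inter> Hs j.
        card (fat_nbrs V S E x \<inter> fat_nbrs V S E y) \<le> 1 \<and>
        (card (fat_nbrs V S E x \<inter> fat_nbrs V S E y) = 1 \<longleftrightarrow> E x y)))"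

definition indecomposable :: "'a set \<Rightarrow> 'a set \<Rightarrow> ('a \<Rightarrow> 'a \<Rightarrow> bool) \<Rightarrow> bool" where
  "indecomposable V S E \<longleftrightarrow> \<not> (\<exists>n Hs. n \<ge> 2 \<and> decomposition V S E n Hs)"

text \<open>The matrix B = A_s - C C^T, indexed by slim vertices.\<close>
definition Bmat :: "'a set \<Rightarrow> 'a set \<Rightarrow> ('a \<Rightarrow> 'a \<Rightarrow> bool) \<Rightarrow> 'a \<Rightarrow> 'a \<Rightarrow> real" where
  "Bmat V S E u v = (if E u v then 1 else 0) - real (card (fat_nbrs V S E u \<inter> fat_nbrs V S E v))"

definition B_eigenvalues :: "'a set \<Rightarrow> 'a set \<Rightarrow> ('a \<Rightarrow> 'a \<Rightarrow> bool) \<Rightarrow> real set" where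
  "B_eigenvalues V S E = {lam. \<exists>x :: 'a \<Rightarrow> real. (\<exists>u\<in>S. x u \<noteq> 0) \<and>
      (\<forall>u\<in>S. (\<Sum>v\<in>S. Bmat V S E u v * x v) = lam * x u)}"

definition lambda_min :: "'a set \<Rightarrow> 'a set \<Rightarrow> ('a \<Rightarrow> 'a \<Rightarrow> bool) \<Rightarrow> real" where
  "lambda_min V S E = Min (B_eigenvalues V S E)"

datatype sign = Plus | Minus

definition special_label :: "'a set \<Rightarrow> 'a set \<Rightarrow> ('a \<Rightarrow> 'a \<Rightarrow> bool) \<Rightarrow> 'a \<Rightarrow> 'a \<Rightarrow> sign option" where
  "special_label V S E u v =
     (if u = v then None
      else if E u v \<and> fat_nbrs V S E u \<inter> fat_nbrs V S E v = {} then Some Plus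
      else if \<not> E u v \<and> fat_nbrs V S E u \<inter> fat_nbrs V S E v \<noteq> {} then Some Minus
      else None)"

definition signed_iso :: "'a set \<Rightarrow> ('a \<Rightarrow> 'a \<Rightarrow> sign option) \<Rightarrow> 'b set \<Rightarrow> ('b \<Rightarrow> 'b \<Rightarrow> sign option) \<Rightarrow> bool" where
  "signed_iso A l B m \<longleftrightarrow> (\<exists>f. bij_betw f A B \<and> (\<forall>u\<in>A. \<forall>v\<in>A. l u v = m (f u) (f v)))"

definition Q001_V :: "nat set" where "Q001_V = {0}"
definition Q001_l :: "nat \<Rightarrow> nat \<Rightarrow> sign option" where "Q001_l u v = None"
definition Q101_V :: "nat set" where "Q101_V = {0, 1}"
definition Q101_l :: "nat \<Rightarrow> nat \<Rightarrow> sign option" where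
  "Q101_l u v = (if u \<noteq> v then Some Plus else None)"
definition Q011_V :: "nat set" where "Q011_V = {0, 1}"
definition Q011_l :: "nat \<Rightarrow> nat \<Rightarrow> sign option" where
  "Q011_l u v = (if u \<noteq> v then Some Minus else None)"

end

theory Submission imports Defs "HOL-Analysis.Function_Topology" "Jordan_Normal_Form.Char_Poly" begin


lemma eig_finite:
  fixes M :: "'a \<Rightarrow> 'a \<Rightarrow> real"
  assumes fin: "finite S"
  shows "finite {lam. \<exists>x. (\<exists>u\<in>S. x u \<noteq> 0) \<and> (\<forall>u\<in>S. (\<Sum>v\<in>S. M u v * x v) = lam * x u)}"
proof -
  obtain g where g: "bij_betw g {0..<card S} S" using ex_bij_betw_nat_finite[OF fin] by blast
  define n where "n = card S"
  define A where "A = mat n n (\<lambda>(i,j). M (g i) (g j))"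
  have A: "A \<in> carrier_mat n n" unfolding A_def by simp
  have "{lam. \<exists>x. (\<exists>u\<in>S. x u \<noteq> 0) \<and> (\<forall>u\<in>S. (\<Sum>v\<in>S. M u v * x v) = lam * x u)}
        \<subseteq> {k. poly (char_poly A) k = 0}"
  proof
    fix lam assume "lam \<in> {lam. \<exists>x. (\<exists>u\<in>S. x u \<noteq> 0) \<and> (\<forall>u\<in>S. (\<Sum>v\<in>S. M u v * x v) = lam * x u)}"
    then obtain x u where u: "u \<in> S" "x u \<noteq> 0" and ev: "\<forall>u\<in>S. (\<Sum>v\<in>S. M u v * x v) = lam * x u" by auto
    define v where "v = vec n (\<lambda>i. x (g i))"
    have vc: "v \<in> carrier_vec n" unfolding v_def by simp
    obtain i where i: "i < n" "g i = u" using g u unfolding n_def bij_betw_def by (metis atLeastLessThan_iff imageE)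
    have "v \<noteq> 0\<^sub>v n"
    proof
      assume "v = 0\<^sub>v n"
      then have "v $ i = 0" using i by simp
      then show False using i u unfolding v_def by simp
    qed
    moreover have "A *\<^sub>v v = lam \<cdot>\<^sub>v v"
    proof (rule eq_vecI)
      fix j assume j: "j < dim_vec (lam \<cdot>\<^sub>v v)"
      then have j: "j < n" unfolding v_def by simp
      have gj: "g j \<in> S" using g j unfolding n_def bij_betw_def by auto
      have "(A *\<^sub>v v) $ j = (\<Sum>k\<in>{0..<n}. M (g j) (g k) * x (g k))"
        using j unfolding A_def v_def by (simp add: scalar_prod_def)
      also have "\<dots> = (\<Sum>w\<in>S. M (g j) w * x w)"
        using sum.reindex_bij_betw[OF g, of "\<lambda>w. M (g j) w * x w"] unfolding n_def by simp
      also have "\<dots> = lam * x (g j)" using ev gj by simp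
      finally show "(A *\<^sub>v v) $ j = (lam \<cdot>\<^sub>v v) $ j" using j unfolding v_def by simp
    next
      show "dim_vec (A *\<^sub>v v) = dim_vec (lam \<cdot>\<^sub>v v)" unfolding A_def v_def by simp
    qed
    ultimately have "eigenvalue A lam" unfolding eigenvalue_def eigenvector_def using vc A by auto
    then show "lam \<in> {k. poly (char_poly A) k = 0}" using eigenvalue_root_char_poly[OF A] by simp
  qed
  moreover have "char_poly A \<noteq> 0" using degree_monic_char_poly[OF A] by auto
  then have "finite {k. poly (char_poly A) k = 0}" by (rule poly_roots_finite)
  ultimately show ?thesis by (rule finite_subset)
qed



lemma quad_expand:
  fixes M :: "'a \<Rightarrow> 'a \<Rightarrow> real"
  shows "(\<Sum>u\<in>S. \<Sum>v\<in>S. (a u + t * b u) * M u v * (a v + t * b v)) =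
    (\<Sum>u\<in>S. \<Sum>v\<in>S. a u * M u v * a v) + t * ((\<Sum>u\<in>S. \<Sum>v\<in>S. a u * M u v * b v) + (\<Sum>u\<in>S. \<Sum>v\<in>S. b u * M u v * a v))
    + t^2 * (\<Sum>u\<in>S. \<Sum>v\<in>S. b u * M u v * b v)"
  by (simp add: algebra_simps sum.distrib sum_distrib_left power2_eq_square)

lemma lin_zero:
  fixes A C :: real
  assumes "\<And>t. 0 \<le> 2 * t * A + t^2 * C" "C \<ge> 0"
  shows "A = 0"
proof (rule ccontr)
  assume "A \<noteq> 0"
  define s where "s = 1 / (C + 1)"
  have s: "s > 0" "s * C < 1" unfolding s_def using assms(2) by (auto simp: field_simps)
  have "2 * (-A * s) * A + (-A * s)^2 * C = A^2 * (s * (s * C - 2))"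
    by (simp add: algebra_simps power2_eq_square)
  also have "\<dots> < 0" using \<open>A \<noteq> 0\<close> s
    by (intro mult_pos_neg) auto
  finally show False using assms(1)[of "-A * s"] by linarith
qed

lemma rayleigh:
  fixes M :: "'a \<Rightarrow> 'a \<Rightarrow> real"
  assumes fin: "finite S" and ne: "S \<noteq> {}" and sym: "\<And>u v. u \<in> S \<Longrightarrow> v \<in> S \<Longrightarrow> M u v = M v u"
  shows "\<exists>m x. (\<exists>u\<in>S. x u \<noteq> 0) \<and> (\<forall>u\<in>S. (\<Sum>v\<in>S. M u v * x v) = m * x u) \<and>
     (\<forall>z. m * (\<Sum>u\<in>S. (z u)^2) \<le> (\<Sum>u\<in>S. \<Sum>v\<in>S. z u * M u v * z v))"
proof -
  define q where "q = (\<lambda>z::'a\<Rightarrow>real. \<Sum>u\<in>S. \<Sum>v\<in>S. z u * M u v * z v)"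
  define nr where "nr = (\<lambda>z::'a\<Rightarrow>real. \<Sum>u\<in>S. (z u)^2)"
  define X where "X = (\<lambda>u. if u \<in> S then {-1..1::real} else {0})"
  define T where "T = Pi\<^sub>E UNIV X \<inter> {z. nr z = 1}"
  have cq: "continuous_on UNIV q" unfolding q_def
    by (intro continuous_intros continuous_on_product_coordinates)
  have cn: "continuous_on UNIV nr" unfolding nr_def
    by (intro continuous_intros continuous_on_product_coordinates)
  have "compactin (product_topology (\<lambda>i. euclidean) UNIV) (Pi\<^sub>E UNIV X)"
    unfolding compactin_PiE X_def by auto
  then have "compact (Pi\<^sub>E UNIV X)" unfolding euclidean_product_topology by simp
  moreover have "closed {z. nr z = 1}"
    using closed_Collect_eq[OF cn continuous_on_const] by simp
  ultimately have cT: "compact T" unfolding T_def by auto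
  obtain s where s: "s \<in> S" using ne by auto
  define e where "e = (\<lambda>w. \<lambda>u::'a. if u = w then (1::real) else 0)"
  have "e s \<in> T" unfolding T_def X_def e_def nr_def using s fin
    by (auto simp: PiE_iff if_distrib[of "\<lambda>x. x^2"] cong: if_cong)
  then have Tne: "T \<noteq> {}" by auto
  obtain z0 where z0: "z0 \<in> T" and zmin: "\<And>y. y \<in> T \<Longrightarrow> q z0 \<le> q y"
    using continuous_attains_inf[OF cT Tne continuous_on_subset[OF cq]] by blast
  define m where "m = q z0"
  have z0S: "\<And>u. u \<notin> S \<Longrightarrow> z0 u = 0" and nz0: "nr z0 = 1"
    using z0 unfolding T_def X_def by (auto simp: PiE_iff split: if_splits)
  have bound: "m * nr w \<le> q w" for w
  proof -
    define w' where "w' = (\<lambda>u. if u \<in> S then w u else 0)"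
    have qw: "q w' = q w" and nw: "nr w' = nr w" unfolding q_def nr_def w'_def
      by (auto intro!: sum.cong)
    show ?thesis
    proof (cases "nr w = 0")
      case True
      then have "\<forall>u\<in>S. (w u)^2 = 0" unfolding nr_def using fin
        by (subst (asm) sum_nonneg_eq_0_iff) auto
      then have "q w = 0" unfolding q_def by simp
      then show ?thesis using True by simp
    next
      case False
      then have pos: "nr w > 0" unfolding nr_def by (simp add: order.not_eq_order_implies_strict sum_nonneg)
      define r where "r = sqrt (nr w)"
      have r: "r > 0" "r^2 = nr w" using pos unfolding r_def by auto
      define y where "y = (\<lambda>u. w' u / r)"
      have "nr y = nr w' / r^2" unfolding y_def nr_def
        by (simp add: power_divide sum_divide_distrib)
      then have ny: "nr y = nr w / r^2" using nw by simp
      have "q y = q w' / r^2" unfolding y_def q_def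
        by (simp add: sum_divide_distrib power2_eq_square)
      then have qy: "q y = q w / r^2" using qw by simp
      have "y \<in> T" unfolding T_def
      proof
        show "y \<in> {z. nr z = 1}" using ny r pos by simp
        show "y \<in> Pi\<^sub>E UNIV X"
        proof -
          have "\<bar>y u\<bar> \<le> 1" if "u \<in> S" for u
          proof -
            have "(y u)^2 \<le> nr y" unfolding nr_def
              using member_le_sum[of u S "\<lambda>u. (y u)^2"] that fin by simp
            then have "(y u)^2 \<le> 1" using ny r pos by simp
            then show ?thesis by (simp add: abs_square_le_1)
          qed
          moreover have "y u = 0" if "u \<notin> S" for u using that unfolding y_def w'_def by simp
          ultimately show ?thesis unfolding X_def by (auto simp: PiE_iff abs_le_iff)
        qed
      qed
      then have "m \<le> q w / r^2" using zmin[of y] qy unfolding m_def by simp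
      then show ?thesis using r pos by (simp add: pos_le_divide_eq)
    qed
  qed
  have eig: "(\<Sum>v\<in>S. M u0 v * z0 v) = m * z0 u0" if u0: "u0 \<in> S" for u0
  proof -
    let ?b = "e u0"
    define A where "A = (\<Sum>u\<in>S. \<Sum>v\<in>S. z0 u * M u v * ?b v) - m * z0 u0"
    define C where "C = q ?b - m * nr ?b"
    have sw: "(\<Sum>u\<in>S. \<Sum>v\<in>S. ?b u * M u v * z0 v) = (\<Sum>u\<in>S. \<Sum>v\<in>S. z0 u * M u v * ?b v)"
      by (subst sum.swap) (auto intro!: sum.cong simp: sym)
    have nrexp: "nr (\<lambda>u. z0 u + t * ?b u) = nr z0 + 2 * t * z0 u0 + t^2 * nr ?b" for t
      unfolding nr_def e_def using u0 fin
      by (simp add: power2_eq_square algebra_simps sum.distrib sum_distrib_left if_distrib[of "\<lambda>x. _ * x"] cong: if_cong)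
    have "0 \<le> 2 * t * A + t^2 * C" for t
    proof -
      have "m * nr (\<lambda>u. z0 u + t * ?b u) \<le> q (\<lambda>u. z0 u + t * ?b u)" by (rule bound)
      also have "q (\<lambda>u. z0 u + t * ?b u) = m + 2 * t * (\<Sum>u\<in>S. \<Sum>v\<in>S. z0 u * M u v * ?b v) + t^2 * q ?b"
        unfolding q_def quad_expand sw using m_def unfolding q_def by simp
      finally show ?thesis unfolding A_def C_def nrexp nz0 by (simp add: algebra_simps)
    qed
    moreover have "C \<ge> 0" using bound[of ?b] unfolding C_def by simp
    ultimately have "A = 0" by (rule lin_zero)
    moreover have "(\<Sum>u\<in>S. \<Sum>v\<in>S. z0 u * M u v * ?b v) = (\<Sum>v\<in>S. M u0 v * z0 v)"
      unfolding e_def using u0 fin by (auto simp: if_distrib[of "\<lambda>x. _ * x"] sym mult.commute cong: if_cong intro!: sum.cong)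
    ultimately show ?thesis unfolding A_def by simp
  qed
  have "\<exists>u\<in>S. z0 u \<noteq> 0"
  proof (rule ccontr)
    assume "\<not> ?thesis" then have "nr z0 = 0" unfolding nr_def by simp
    then show False using nz0 by simp
  qed
  then show ?thesis using eig bound unfolding q_def nr_def by blast
qed



lemma hg_facts:
  assumes "hoffman_graph V S E"
  shows "finite V" "S \<subseteq> V" "\<And>u v. E u v \<Longrightarrow> u \<in> V" "\<And>u v. E u v \<Longrightarrow> v \<in> V"
    "\<And>u v. E u v \<Longrightarrow> E v u" "\<And>u. \<not> E u u"
    "\<And>y. y \<in> V - S \<Longrightarrow> \<exists>x\<in>S. E x y" "\<And>y z. y \<in> V - S \<Longrightarrow> z \<in> V - S \<Longrightarrow> \<not> E y z"
  using assms unfolding hoffman_graph_def by blast+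

lemma induced_part:
  assumes hg: "hoffman_graph V S E" and T: "T \<subseteq> S"
  shows "induced_hoffman_subgraph V S E (T \<union> (\<Union>u\<in>T. fat_nbrs V S E u))"
proof -
  note h = hg_facts[OF hg]
  let ?W = "T \<union> (\<Union>u\<in>T. fat_nbrs V S E u)"
  have WV: "?W \<subseteq> V" using T h(2) unfolding fat_nbrs_def by auto
  have "finite ?W" using WV h(1) finite_subset by blast
  moreover have "\<forall>y\<in>?W - S \<inter> ?W. \<exists>x\<in>S \<inter> ?W. E x y \<and> x \<in> ?W \<and> y \<in> ?W"
  proof
    fix y assume y: "y \<in> ?W - S \<inter> ?W"
    then obtain u where "u \<in> T" "y \<in> fat_nbrs V S E u" using T by auto
    then show "\<exists>x\<in>S \<inter> ?W. E x y \<and> x \<in> ?W \<and> y \<in> ?W" using T y unfolding fat_nbrs_def by blast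
  qed
  moreover have "\<forall>y\<in>?W - S \<inter> ?W. \<forall>z\<in>?W - S \<inter> ?W. \<not> (E y z \<and> y \<in> ?W \<and> z \<in> ?W)"
    using h(8) WV by blast
  moreover have "S \<inter> ?W \<subseteq> ?W" by blast
  moreover have "\<forall>u v. E u v \<and> u \<in> ?W \<and> v \<in> ?W \<longrightarrow> u \<in> ?W \<and> v \<in> ?W" by blast
  moreover have "\<forall>u v. E u v \<and> u \<in> ?W \<and> v \<in> ?W \<longrightarrow> E v u \<and> v \<in> ?W \<and> u \<in> ?W" using h(5) by blast
  moreover have "\<forall>u. \<not> (E u u \<and> u \<in> ?W \<and> u \<in> ?W)" using h(6) by blast
  ultimately show ?thesis unfolding induced_hoffman_subgraph_def hoffman_graph_def
    using WV apply (intro conjI) apply assumption+ done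
qed

lemma split_decomp:
  assumes hg: "hoffman_graph V S E" and K: "K \<subseteq> S" "K \<noteq> {}" "S - K \<noteq> {}"
    and cond: "\<And>u v. u \<in> K \<Longrightarrow> v \<in> S - K \<Longrightarrow>
       card (fat_nbrs V S E u \<inter> fat_nbrs V S E v) \<le> 1 \<and>
       (card (fat_nbrs V S E u \<inter> fat_nbrs V S E v) = 1 \<longleftrightarrow> E u v)"
  shows "\<not> indecomposable V S E"
proof -
  note h = hg_facts[OF hg]
  define A where "A = K \<union> (\<Union>u\<in>K. fat_nbrs V S E u)"
  define B where "B = (S - K) \<union> (\<Union>u\<in>S - K. fat_nbrs V S E u)"
  define Hs where "Hs = (\<lambda>i::nat. if i = 0 then A else B)"
  have fS: "fat_nbrs V S E u \<inter> S = {}" for u unfolding fat_nbrs_def by auto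
  have SA: "S \<inter> A = K" unfolding A_def using K fS by auto
  have SB: "S \<inter> B = S - K" unfolding B_def using fS by auto
  have iA: "induced_hoffman_subgraph V S E A" unfolding A_def by (rule induced_part[OF hg K(1)])
  have iB: "induced_hoffman_subgraph V S E B" unfolding B_def by (rule induced_part[OF hg]) auto
  have VAB: "V = A \<union> B"
  proof
    show "A \<union> B \<subseteq> V" using iA iB unfolding induced_hoffman_subgraph_def by auto
    show "V \<subseteq> A \<union> B"
    proof
      fix v assume v: "v \<in> V"
      show "v \<in> A \<union> B"
      proof (cases "v \<in> S")
        case True then show ?thesis unfolding A_def B_def by auto
      next
        case False
        then obtain u where "u \<in> S" "E u v" using h(7) v by blast
        then have "v \<in> fat_nbrs V S E u" using v False unfolding fat_nbrs_def by auto
        then show ?thesis unfolding A_def B_def using \<open>u \<in> S\<close> by blast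
      qed
    qed
  qed
  have less2: "i < (2::nat) \<Longrightarrow> i = 0 \<or> i = 1" for i by auto
  have "decomposition V S E 2 Hs"
    unfolding decomposition_def
  proof (intro conjI allI impI ballI)
    fix i :: nat assume "i < 2"
    then show "Hs i \<noteq> {}" "induced_hoffman_subgraph V S E (Hs i)"
      using K iA iB SA SB unfolding Hs_def by (auto dest!: less2)
  next
    show "V = (\<Union>i<2. Hs i)" using VAB unfolding Hs_def by (auto simp: lessThan_nat_numeral)
  next
    fix i j :: nat assume "i < 2" "j < 2" "i \<noteq> j"
    then show "S \<inter> Hs i \<inter> (S \<inter> Hs j) = {}" using SA SB unfolding Hs_def by (auto dest!: less2)
  next
    fix i :: nat and x assume "i < 2" "x \<in> S \<inter> Hs i"
    then show "fat_nbrs V S E x \<subseteq> Hs i" using SA SB unfolding Hs_def A_def B_def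
      by (auto dest!: less2)
  next
    fix i j :: nat and x y assume ij: "i < 2" "j < 2" "i \<noteq> j" and x: "x \<in> S \<inter> Hs i" and y: "y \<in> S \<inter> Hs j"
    have "(x \<in> K \<and> y \<in> S - K) \<or> (y \<in> K \<and> x \<in> S - K)"
    proof (cases "i = 0")
      case True
      then have "j = 1" using ij by auto
      then show ?thesis using True x y SA SB unfolding Hs_def by simp
    next
      case False
      then have "i = 1" "j = 0" using ij by auto
      then show ?thesis using x y SA SB unfolding Hs_def by simp
    qed
    then have both: "card (fat_nbrs V S E x \<inter> fat_nbrs V S E y) \<le> 1 \<and>
        (card (fat_nbrs V S E x \<inter> fat_nbrs V S E y) = 1) = E x y"
    proof
      assume "x \<in> K \<and> y \<in> S - K" then show ?thesis using cond by blast
    next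
      assume "y \<in> K \<and> x \<in> S - K" then have "card (fat_nbrs V S E y \<inter> fat_nbrs V S E x) \<le> 1 \<and>
       (card (fat_nbrs V S E y \<inter> fat_nbrs V S E x) = 1 \<longleftrightarrow> E y x)" using cond by blast
      then show ?thesis using h(5) by (metis Int_commute)
    qed
    then show "card (fat_nbrs V S E x \<inter> fat_nbrs V S E y) \<le> 1" by blast
    from both show "(card (fat_nbrs V S E x \<inter> fat_nbrs V S E y) = 1) = E x y" by blast
  qed
  then show ?thesis unfolding indecomposable_def by auto
qed

lemma test_gen:
  fixes M :: "'a \<Rightarrow> 'a \<Rightarrow> real"
  assumes fin: "finite S" and T: "T \<subseteq> S" and z: "\<And>u. u \<notin> T \<Longrightarrow> z u = 0"
    and Kq: "\<And>z. c0 * (\<Sum>u\<in>S. (z u)^2) \<le> (\<Sum>u\<in>S. \<Sum>v\<in>S. z u * M u v * z v)"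
  shows "c0 * (\<Sum>u\<in>T. (z u)^2) \<le> (\<Sum>u\<in>T. \<Sum>v\<in>T. z u * M u v * z v)"
proof -
  have 1: "(\<Sum>u\<in>S. (z u)^2) = (\<Sum>u\<in>T. (z u)^2)"
    by (rule sum.mono_neutral_right[OF fin T]) (auto simp: z)
  have 2: "(\<Sum>v\<in>S. z u * M u v * z v) = (\<Sum>v\<in>T. z u * M u v * z v)" for u
    by (rule sum.mono_neutral_right[OF fin T]) (auto simp: z)
  have 3: "(\<Sum>u\<in>S. \<Sum>v\<in>T. z u * M u v * z v) = (\<Sum>u\<in>T. \<Sum>v\<in>T. z u * M u v * z v)"
    by (rule sum.mono_neutral_right[OF fin T]) (auto simp: z)
  show ?thesis using Kq[of z] unfolding 1 2 3 .
qed

lemma test1: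
  fixes M :: "'a \<Rightarrow> 'a \<Rightarrow> real"
  assumes fin: "finite S" and x: "x \<in> S"
    and Kq: "\<And>z. c0 * (\<Sum>u\<in>S. (z u)^2) \<le> (\<Sum>u\<in>S. \<Sum>v\<in>S. z u * M u v * z v)"
  shows "c0 \<le> M x x"
  using test_gen[OF fin _ _ Kq, of "{x}" "\<lambda>u. if u = x then 1 else 0"] x by simp

lemma test2:
  fixes M :: "'a \<Rightarrow> 'a \<Rightarrow> real"
  assumes fin: "finite S" and xy: "x \<in> S" "y \<in> S" "x \<noteq> y"
    and sym: "M y x = M x y"
    and Kq: "\<And>z. c0 * (\<Sum>u\<in>S. (z u)^2) \<le> (\<Sum>u\<in>S. \<Sum>v\<in>S. z u * M u v * z v)"
  shows "c0 * (a^2 + b^2) \<le> a^2 * M x x + b^2 * M y y + 2 * a * b * M x y"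
  using test_gen[OF fin _ _ Kq, of "{x,y}" "\<lambda>u. if u = x then a else if u = y then b else 0"] xy sym
  by (simp add: algebra_simps power2_eq_square)

lemma test3:
  fixes M :: "'a \<Rightarrow> 'a \<Rightarrow> real"
  assumes fin: "finite S" and xy: "x \<in> S" "y \<in> S" "w \<in> S" "x \<noteq> y" "x \<noteq> w" "y \<noteq> w"
    and sym: "M y x = M x y" "M w x = M x w" "M w y = M y w"
    and Kq: "\<And>z. c0 * (\<Sum>u\<in>S. (z u)^2) \<le> (\<Sum>u\<in>S. \<Sum>v\<in>S. z u * M u v * z v)"
  shows "c0 * (a^2 + b^2 + c^2) \<le> a^2 * M x x + b^2 * M y y + c^2 * M w w
     + 2 * a * b * M x y + 2 * a * c * M x w + 2 * b * c * M y w"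
  using test_gen[OF fin _ _ Kq, of "{x,y,w}" "\<lambda>u. if u = x then a else if u = y then b else if u = w then c else 0"] xy sym
  by (simp add: algebra_simps power2_eq_square)



lemma sqrt5_lt: "sqrt 5 < (2237/1000::real)"
proof -
  have "sqrt 5 < sqrt ((2237/1000::real)^2)" by (rule real_sqrt_less_mono) (simp add: power2_eq_square)
  then show ?thesis by simp
qed

lemma comb_main:
  fixes V S :: "'a set" and E :: "'a \<Rightarrow> 'a \<Rightarrow> bool"
  assumes hg: "hoffman_graph V S E" and fat: "fat_hoffman V S E" and ind: "indecomposable V S E"
    and Kq: "\<And>z. (-1 - (1 + sqrt 5)/2) * (\<Sum>u\<in>S. (z u)^2) \<le> (\<Sum>u\<in>S. \<Sum>v\<in>S. z u * Bmat V S E u v * z v)"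
    and x: "x \<in> S" and dx: "card (fat_nbrs V S E x) \<ge> 2"
  shows "(signed_iso S (special_label V S E) Q001_V Q001_l \<or>
          signed_iso S (special_label V S E) Q101_V Q101_l \<or>
          signed_iso S (special_label V S E) Q011_V Q011_l) \<and> card S \<le> 2"
proof -
  note h = hg_facts[OF hg]
  define c0 where "c0 = (-1 - (1 + sqrt 5)/2 :: real)"
  have c0: "c0 > -262/100" unfolding c0_def using sqrt5_lt by (simp add: field_simps)
  define M where "M = Bmat V S E"
  define fn where "fn = fat_nbrs V S E"
  define cn where "cn = (\<lambda>u v. card (fn u \<inter> fn v))"
  have finS: "finite S" using h(1) h(2) finite_subset by blast
  have finfn: "finite (fn u)" for u using h(1) unfolding fn_def fat_nbrs_def by simp
  have Kq': "\<And>z. c0 * (\<Sum>u\<in>S. (z u)^2) \<le> (\<Sum>u\<in>S. \<Sum>v\<in>S. z u * M u v * z v)"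
    using Kq unfolding c0_def M_def by blast
  have Mdef: "M u v = (if E u v then 1 else 0) - real (cn u v)" for u v
    unfolding M_def Bmat_def cn_def fn_def by simp
  have Msym: "M v u = M u v" for u v unfolding Mdef cn_def using h(5) by (metis Int_commute)
  have Mdiag: "M u u = - real (card (fn u))" for u unfolding Mdef cn_def using h(6) by simp
  have cn_sym: "cn v u = cn u v" for u v unfolding cn_def by (simp add: Int_commute)
  have cn_le1: "cn u v \<le> card (fn u)" "cn u v \<le> card (fn v)" for u v
    unfolding cn_def using finfn by (auto intro: card_mono)
  have T1: "c0 \<le> M u u" if "u \<in> S" for u by (rule test1[OF finS that Kq'])
  have T2: "c0 * (a^2 + b^2) \<le> a^2 * M u u + b^2 * M v v + 2 * a * b * M u v"
    if "u \<in> S" "v \<in> S" "u \<noteq> v" for u v a b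
    by (rule test2[OF finS that Msym Kq'])
  have T3: "c0 * (a^2 + b^2 + c^2) \<le> a^2 * M u u + b^2 * M v v + c^2 * M w w
     + 2 * a * b * M u v + 2 * a * c * M u w + 2 * b * c * M v w"
    if "u \<in> S" "v \<in> S" "w \<in> S" "u \<noteq> v" "u \<noteq> w" "v \<noteq> w" for u v w a b c
    by (rule test3[OF finS that Msym Msym Msym Kq'])
  have d_le2: "card (fn u) \<le> 2" if "u \<in> S" for u
  proof (rule ccontr)
    assume "\<not> ?thesis"
    then have "real (card (fn u)) \<ge> 3" by simp
    then show False using T1[OF that] Mdiag[of u] c0 by simp
  qed
  have d_ge1: "card (fn u) \<ge> 1" if "u \<in> S" for u
    using fat that finfn unfolding fat_hoffman_def fn_def by (simp add: Suc_le_eq card_gt_0_iff)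
  have cn1: "cn u v \<le> 1" if "u \<in> S" "v \<in> S" "u \<noteq> v" for u v
  proof (rule ccontr)
    assume "\<not> ?thesis"
    then have "cn u v = 2" using cn_le1[of u v] d_le2[OF that(1)] by simp
    then have "card (fn u) = 2" "card (fn v) = 2" using cn_le1[of u v] d_le2 that by force+
    moreover have "M u v \<le> -1" using \<open>cn u v = 2\<close> unfolding Mdef by simp
    ultimately show False using T2[OF that, of 1 1] Mdiag[of u] Mdiag[of v] c0 by simp
  qed
  have Mvals: "M u v = -1 \<or> M u v = 0 \<or> M u v = 1" if "u \<in> S" "v \<in> S" "u \<noteq> v" for u v
    using cn1[OF that] unfolding Mdef by (cases "cn u v") auto
  have M22: "M u v = 0" if "u \<in> S" "v \<in> S" "u \<noteq> v" "card (fn u) = 2" "card (fn v) = 2" for u v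
  proof (rule ccontr)
    assume ne: "M u v \<noteq> 0"
    then have "(M u v)^2 = 1" using Mvals[OF that(1-3)] by auto
    then show False using T2[OF that(1-3), of 1 "- M u v"] Mdiag[of u] Mdiag[of v] that(4,5) c0
      by (simp add: power2_eq_square algebra_simps)
  qed
  have label: "special_label V S E u v = (if M u v = 1 then Some Plus else if M u v = -1 then Some Minus else None)"
    if "u \<in> S" "v \<in> S" "u \<noteq> v" for u v
  proof -
    have c01: "cn u v = 0 \<or> cn u v = 1" using cn1[OF that] by auto
    have em: "fn u \<inter> fn v = {} \<longleftrightarrow> cn u v = 0" unfolding cn_def using finfn by simp
    show ?thesis unfolding special_label_def using that c01 em unfolding fn_def[symmetric]
      by (auto simp: Mdef)
  qed
  have edge0: "cn u v \<le> 1 \<and> (cn u v = 1 \<longleftrightarrow> E u v)" if "u \<in> S" "v \<in> S" "u \<noteq> v" "M u v = 0" for u v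
    using cn1[OF that(1-3)] that(4) unfolding Mdef by (cases "E u v") auto
  have dx2: "card (fn x) = 2" using dx d_le2[OF x] unfolding fn_def by simp
  define N where "N = {y\<in>S. y \<noteq> x \<and> M x y \<noteq> 0}"
  have N1: "card (fn y) = 1" if "y \<in> N" for y
  proof -
    have "y \<in> S" "y \<noteq> x" "M x y \<noteq> 0" using that unfolding N_def by auto
    then show ?thesis using d_le2[of y] d_ge1[of y] M22[OF x, of y] dx2 by force
  qed
  have pm1: "M x y = 1 \<or> M x y = -1" if "y \<in> N" for y
    using that Mvals[OF x] unfolding N_def by auto
  have N2: "y = w" if "y \<in> N" "w \<in> N" for y w
  proof (rule ccontr)
    assume yw: "y \<noteq> w"
    have S: "y \<in> S" "w \<in> S" "x \<noteq> y" "x \<noteq> w" using that unfolding N_def by auto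
    have dd: "M y y = -1" "M w w = -1" "M x x = -2" using N1 that Mdiag dx2 by auto
    have r: "M y w = -1 \<or> M y w = 0 \<or> M y w = 1" by (rule Mvals[OF S(1,2) yw])
    have T: "c0 * (4^2 + (-2 * M x y)^2 + (-2 * M x w)^2) \<le> 4^2 * M x x + (-2 * M x y)^2 * M y y + (-2 * M x w)^2 * M w w
     + 2 * 4 * (-2 * M x y) * M x y + 2 * 4 * (-2 * M x w) * M x w + 2 * (-2 * M x y) * (-2 * M x w) * M y w"
      by (rule T3[OF x S(1,2) S(3,4) yw])
    show False using T pm1[OF that(1)] pm1[OF that(2)] r dd c0
      by (auto simp: power2_eq_square)
  qed
  have N3: "M y w = 0" if "y \<in> N" "w \<in> S" "w \<noteq> x" "w \<noteq> y" "M x w = 0" for y w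
  proof (rule ccontr)
    assume ne: "M y w \<noteq> 0"
    have S: "y \<in> S" "x \<noteq> y" using that unfolding N_def by auto
    have dd: "M y y = -1" "M x x = -2" "M w w = -1 \<or> M w w = -2"
      using N1 that Mdiag dx2 d_le2[of w] d_ge1[of w] by force+
    have r: "M y w = -1 \<or> M y w = 1" using Mvals[OF S(1) that(2) that(4)[symmetric]] ne by auto
    have T: "c0 * (4^2 + (-3 * M x y)^2 + (2 * M x y * M y w)^2) \<le> 4^2 * M x x + (-3 * M x y)^2 * M y y
      + (2 * M x y * M y w)^2 * M w w
     + 2 * 4 * (-3 * M x y) * M x y + 2 * 4 * (2 * M x y * M y w) * M x w
     + 2 * (-3 * M x y) * (2 * M x y * M y w) * M y w"
      by (rule T3[OF x S(1) that(2) S(2) that(3)[symmetric] that(4)[symmetric]])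
    show False using T pm1[OF that(1)] r dd c0 that(5)
      by (auto simp: power2_eq_square)
  qed
  define K where "K = insert x N"
  have KS: "K \<subseteq> S" unfolding K_def N_def using x by auto
  have SK: "S = K"
  proof (rule ccontr)
    assume "S \<noteq> K"
    then have "S - K \<noteq> {}" using KS by auto
    moreover have "cn u v \<le> 1 \<and> (cn u v = 1 \<longleftrightarrow> E u v)" if "u \<in> K" "v \<in> S - K" for u v
    proof -
      have v: "v \<in> S" "v \<noteq> x" "M x v = 0" using that unfolding K_def N_def by auto
      have "u \<in> S" "u \<noteq> v" using that KS by auto
      moreover have "M u v = 0"
      proof (cases "u = x")
        case True then show ?thesis using v by simp
      next
        case False
        then have "u \<in> N" using that unfolding K_def by simp
        then show ?thesis using N3[of u v] v that by auto
      qed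
      ultimately show ?thesis using edge0 v by blast
    qed
    ultimately have "\<not> indecomposable V S E"
      using split_decomp[OF hg KS] unfolding K_def cn_def fn_def by blast
    then show False using ind by simp
  qed
  show ?thesis
  proof (cases "N = {}")
    case True
    then have S1: "S = {x}" using SK unfolding K_def by simp
    have "signed_iso S (special_label V S E) Q001_V Q001_l"
      unfolding signed_iso_def S1 Q001_V_def Q001_l_def
      by (rule exI[of _ "\<lambda>_. 0"]) (auto simp: special_label_def bij_betw_def)
    then show ?thesis using S1 by simp
  next
    case False
    then obtain y where y: "y \<in> N" by auto
    then have Ny: "N = {y}" using N2 by auto
    have yS: "y \<in> S" "y \<noteq> x" using y unfolding N_def by auto
    have S2: "S = {x, y}" using SK Ny unfolding K_def by simp
    define f where "f = (\<lambda>u. if u = x then 0 else (1::nat))"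
    have bij: "bij_betw f S {0, 1}" unfolding S2 f_def bij_betw_def using yS by auto
    have lxy: "special_label V S E x y = special_label V S E y x" using label[OF x yS(1) yS(2)[symmetric]]
      label[OF yS(1) x yS(2)] Msym[of x y] by simp
    have lxx: "special_label V S E u u = None" for u unfolding special_label_def by simp
    have "signed_iso S (special_label V S E) Q101_V Q101_l \<or> signed_iso S (special_label V S E) Q011_V Q011_l"
    proof (cases "M x y = 1")
      case True
      have "special_label V S E x y = Some Plus" using label[OF x yS(1) yS(2)[symmetric]] True by simp
      then have "signed_iso S (special_label V S E) Q101_V Q101_l"
        unfolding signed_iso_def Q101_V_def
        using bij lxy lxx yS unfolding S2 f_def Q101_l_def by (intro exI[of _ f]) (auto simp: f_def)
      then show ?thesis by simp
    next
      case False
      then have "M x y = -1" using pm1[OF y] by simp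
      then have "special_label V S E x y = Some Minus" using label[OF x yS(1) yS(2)[symmetric]] by simp
      then have "signed_iso S (special_label V S E) Q011_V Q011_l"
        unfolding signed_iso_def Q011_V_def
        using bij lxy lxx yS unfolding S2 f_def Q011_l_def by (intro exI[of _ f]) (auto simp: f_def)
      then show ?thesis by simp
    qed
    moreover have "card S \<le> 2" using S2 by (simp add: card_insert_le_m1)
    ultimately show ?thesis by blast
  qed
qed


theorem mainTheorem10:
  fixes V S :: "'a set" and E :: "'a \<Rightarrow> 'a \<Rightarrow> bool"
  assumes "hoffman_graph V S E"
    and "fat_hoffman V S E"
    and "indecomposable V S E"
    and "lambda_min V S E \<ge> -1 - (1 + sqrt 5) / 2"
    and "\<exists>x\<in>S. card (fat_nbrs V S E x) \<ge> 2"
  shows "(signed_iso S (special_label V S E) Q001_V Q001_l \<or>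
          signed_iso S (special_label V S E) Q101_V Q101_l \<or>
          signed_iso S (special_label V S E) Q011_V Q011_l) \<and> card S \<le> 2"
proof -
  note h = hg_facts[OF assms(1)]
  obtain x where x: "x \<in> S" "card (fat_nbrs V S E x) \<ge> 2" using assms(5) by blast
  have finS: "finite S" using h(1) h(2) finite_subset by blast
  have sym: "Bmat V S E u v = Bmat V S E v u" if "u \<in> S" "v \<in> S" for u v
  proof -
    have "E u v = E v u" using h(5) by blast
    then show ?thesis unfolding Bmat_def by (simp add: Int_commute)
  qed
  obtain m xv where ev: "\<exists>u\<in>S. xv u \<noteq> 0" "\<forall>u\<in>S. (\<Sum>v\<in>S. Bmat V S E u v * xv v) = m * xv u"
    and bd: "\<And>z. m * (\<Sum>u\<in>S. (z u)^2) \<le> (\<Sum>u\<in>S. \<Sum>v\<in>S. z u * Bmat V S E u v * z v)"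
  proof -
    have "S \<noteq> {}" using x(1) by blast
    from rayleigh[of S "Bmat V S E", OF finS this sym] show ?thesis using that by blast
  qed
  have "m \<in> B_eigenvalues V S E" unfolding B_eigenvalues_def using ev by blast
  moreover have "finite (B_eigenvalues V S E)" unfolding B_eigenvalues_def by (rule eig_finite[OF finS])
  ultimately have "lambda_min V S E \<le> m" unfolding lambda_min_def by (rule Min_le[rotated])
  then have cm: "-1 - (1 + sqrt 5) / 2 \<le> m" using assms(4) by linarith
  have Kq: "(-1 - (1 + sqrt 5)/2) * (\<Sum>u\<in>S. (z u)^2) \<le> (\<Sum>u\<in>S. \<Sum>v\<in>S. z u * Bmat V S E u v * z v)" for z
  proof -
    have "(-1 - (1 + sqrt 5)/2) * (\<Sum>u\<in>S. (z u)^2) \<le> m * (\<Sum>u\<in>S. (z u)^2)"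
      using cm by (intro mult_right_mono sum_nonneg) auto
    then show ?thesis using bd[of z] by linarith
  qed
  show ?thesis by (rule comb_main[OF assms(1-3) Kq x])
qed

end
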